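(* Let $\hat H(w)=e^{-w}$ (discrete delay) and $\alpha,\beta\in\mathbb{R}$. If for some $\tilde\tau^*>0$ and $\omega>0$ the number $w=i\omega$ is a simple root of $\Phi(w)=0$ at $\tilde\tau=\tilde\tau^*$, then the root branch $w(\tilde\tau)$ through $i\omega$ satisfies $$\operatorname{Re}\left.\frac{dw}{d\tilde\tau}\right|_{\tilde\tau=\tilde\tau^*}=\frac{\omega^2}{\tilde\tau^*\big((1+\tilde\tau^* )^2+\omega^2\big)}>0.$$ In particular, every crossing of roots through the imaginary axis as $\tilde\tau$ increases is from left to right (so no stability switch back to stability can occur as $\tilde\tau$ increases).
   Context: For a delay-to-time-constant ratio $\tilde\tau>0$ and $\alpha,\beta\in\mathbb{R}$, the rescaled characteristic equation of the linearized coupled Wilson–Cowan system with kernel transform $\hat H$ is $$\Phi(w):=(w+\tilde\tau)^4-\alpha\,\tilde\tau^2(w+\tilde\tau)^2\hat H(w)^2+\beta\,\tilde\tau^4\hat H(w)^4=0.$$ For the Dirac (discrete) delay kernel $h(t)=\delta(t-\tau)$, $\hat H(w)=e^{-w}$. *)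

theory Defs
  imports "HOL-Analysis.Analysis"
begin

definition Hhat :: "complex \<Rightarrow> complex" where
  "Hhat w = exp (- w)"

definition Phi :: "real \<Rightarrow> real \<Rightarrow> real \<Rightarrow> complex \<Rightarrow> complex" where
  "Phi \<alpha> \<beta> \<tau> w =
     (w + of_real \<tau>) ^ 4
     - of_real \<alpha> * (of_real \<tau>) ^ 2 * (w + of_real \<tau>) ^ 2 * (Hhat w) ^ 2
     + of_real \<beta> * (of_real \<tau>) ^ 4 * (Hhat w) ^ 4"

end

theory Submission
  imports Defs
begin

lemma vd_pow:
  fixes f :: "real \<Rightarrow> complex"
  assumes "(f has_vector_derivative f') (at x)"
  shows "((\<lambda>t. f t ^ n) has_vector_derivative (f' * (of_nat n * f x ^ (n - 1)))) (at x)"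
proof -
  have "((\<lambda>z::complex. z ^ n) has_field_derivative (of_nat n * f x ^ (n - 1))) (at (f x))"
    by (auto intro!: derivative_eq_intros)
  from field_vector_diff_chain_at[OF assms this] show ?thesis by (simp add: o_def)
qed

lemma vd_exp:
  fixes f :: "real \<Rightarrow> complex"
  assumes "(f has_vector_derivative f') (at x)"
  shows "((\<lambda>t. exp (- f t)) has_vector_derivative (f' * (- exp (- f x)))) (at x)"
proof -
  have "((\<lambda>z::complex. exp (- z)) has_field_derivative (- exp (- f x))) (at (f x))"
    by (auto intro!: derivative_eq_intros)
  from field_vector_diff_chain_at[OF assms this] show ?thesis by (simp add: o_def)
qed

theorem mainTheorem6:
  fixes \<alpha> \<beta> \<tau>s \<omega> :: real and w :: "real \<Rightarrow> complex" and w' :: complex and \<epsilon> :: real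
  assumes "\<tau>s > 0" and "\<omega> > 0"
    and "Phi \<alpha> \<beta> \<tau>s (\<i> * of_real \<omega>) = 0"
    and "deriv (Phi \<alpha> \<beta> \<tau>s) (\<i> * of_real \<omega>) \<noteq> 0"
    and "\<epsilon> > 0"
    and "\<And>t. \<bar>t - \<tau>s\<bar> < \<epsilon> \<Longrightarrow> Phi \<alpha> \<beta> t (w t) = 0"
    and "w \<tau>s = \<i> * of_real \<omega>"
    and "(w has_vector_derivative w') (at \<tau>s)"
  shows "Re w' = \<omega>\<^sup>2 / (\<tau>s * ((1 + \<tau>s)\<^sup>2 + \<omega>\<^sup>2))
         \<and> \<omega>\<^sup>2 / (\<tau>s * ((1 + \<tau>s)\<^sup>2 + \<omega>\<^sup>2)) > 0"
proof -
  define W where "W = \<i> * complex_of_real \<omega>"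
  define T where "T = complex_of_real \<tau>s"
  define a where "a = W + T"
  define E where "E = exp (- W)"
  define Pw where "Pw = 4 * a^3 - of_real \<alpha> * T^2 * (2 * a * E^2 - 2 * a^2 * E^2) - 4 * of_real \<beta> * T^4 * E^4"
  define Pt where "Pt = 4 * a^3 - of_real \<alpha> * (2 * T * a^2 + 2 * T^2 * a) * E^2 + 4 * of_real \<beta> * T^3 * E^4"
  have Phi0: "a^4 - of_real \<alpha> * T^2 * a^2 * E^2 + of_real \<beta> * T^4 * E^4 = 0"
    using assms(3) unfolding Phi_def Hhat_def a_def T_def E_def W_def by simp
  have "(Phi \<alpha> \<beta> \<tau>s has_field_derivative Pw) (at W)"
    unfolding Phi_def Hhat_def
    apply (rule derivative_eq_intros refl)+
    apply (unfold Pw_def a_def E_def T_def)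
    apply simp
    by algebra
  hence "deriv (Phi \<alpha> \<beta> \<tau>s) W = Pw" by (rule DERIV_imp_deriv)
  with assms(4) have Pwnz: "Pw \<noteq> 0" by (simp add: W_def)
  have dw: "(w has_vector_derivative w') (at \<tau>s)" by fact
  have dA: "((\<lambda>t. w t + of_real t) has_vector_derivative (w' + 1)) (at \<tau>s)"
    using has_vector_derivative_add[OF dw has_vector_derivative_of_real[OF DERIV_ident]] by simp
  have dT: "((\<lambda>t. complex_of_real t) has_vector_derivative 1) (at \<tau>s)"
    using has_vector_derivative_of_real[OF DERIV_ident] by simp
  note dE = vd_exp[OF dw]
  have dg: "((\<lambda>t. Phi \<alpha> \<beta> t (w t)) has_vector_derivative
     ((w' + 1) * (of_nat 4 * (w \<tau>s + of_real \<tau>s) ^ (4 - 1))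
      - (of_real \<alpha> * (of_real \<tau>s)^2 * (w \<tau>s + of_real \<tau>s)^2 * ((w' * (- exp (- w \<tau>s))) * (of_nat 2 * exp (- w \<tau>s) ^ (2 - 1)))
        + (of_real \<alpha> * (of_real \<tau>s)^2 * ((w' + 1) * (of_nat 2 * (w \<tau>s + of_real \<tau>s) ^ (2 - 1)))
        + of_real \<alpha> * (1 * (of_nat 2 * of_real \<tau>s ^ (2 - 1))) * (w \<tau>s + of_real \<tau>s)^2) * exp (- w \<tau>s) ^ 2)
      + (of_real \<beta> * (of_real \<tau>s)^4 * ((w' * (- exp (- w \<tau>s))) * (of_nat 4 * exp (- w \<tau>s) ^ (4 - 1)))
        + of_real \<beta> * (1 * (of_nat 4 * of_real \<tau>s ^ (4 - 1))) * exp (- w \<tau>s) ^ 4))) (at \<tau>s)"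
    unfolding Phi_def Hhat_def
    by (intro has_vector_derivative_add has_vector_derivative_diff has_vector_derivative_mult
        has_vector_derivative_mult_right vd_pow dA dE dT)
  have g0: "((\<lambda>t. Phi \<alpha> \<beta> t (w t)) has_vector_derivative 0) (at \<tau>s)"
  proof (rule has_vector_derivative_transform_within_open[OF has_vector_derivative_const[of 0]])
    show "open (ball \<tau>s \<epsilon>)" by simp
    show "\<tau>s \<in> ball \<tau>s \<epsilon>" using assms(5) by simp
    fix y assume "y \<in> ball \<tau>s \<epsilon>"
    hence "\<bar>y - \<tau>s\<bar> < \<epsilon>" by (simp add: dist_real_def abs_minus_commute)
    thus "0 = Phi \<alpha> \<beta> y (w y)" using assms(6) by simp
  qed
  note eq = vector_derivative_unique_at[OF dg g0]
  have e1: "Pt + Pw * w' = 0"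
    using eq unfolding assms(7) Pt_def Pw_def a_def E_def T_def W_def[symmetric]
    apply simp
    by algebra
  have e2: "a * (-Pt*T*(a+1) - W*Pw) = -4 * (a^4 - of_real \<alpha> * T^2 * a^2 * E^2 + of_real \<beta> * T^4 * E^4) * (T*(a+1)+W)"
    unfolding Pt_def Pw_def a_def by algebra
  have anz: "a \<noteq> 0"
  proof
    assume "a = 0"
    hence "Re a = 0" by simp
    thus False using assms(1) by (simp add: a_def W_def T_def)
  qed
  have a1nz: "a + 1 \<noteq> 0"
  proof
    assume "a + 1 = 0"
    hence "Re (a+1) = 0" by simp
    thus False using assms(1) by (simp add: a_def W_def T_def)
  qed
  have Tnz: "T \<noteq> 0" using assms(1) by (simp add: T_def)
  have e3: "- (Pt*T*(a+1)) = W*Pw" using e2 Phi0 anz by simp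
  have "Pw * (w' * T * (a+1)) = Pw * W"
  proof -
    have "Pt = - Pw * w'" using e1 by (simp add: algebra_simps add_eq_0_iff)
    with e3 show ?thesis by (simp add: algebra_simps)
  qed
  hence "w' * T * (a+1) = W" using Pwnz by simp
  hence w'eq: "w' = W / (T * (a+1))" using Tnz a1nz by (simp add: eq_divide_eq mult.commute mult.left_commute)
  have den: "(1 + \<tau>s)\<^sup>2 + \<omega>\<^sup>2 > 0" using assms(1) by (simp add: add_pos_nonneg)
  have "Re w' = \<omega>\<^sup>2 / (\<tau>s * ((1 + \<tau>s)\<^sup>2 + \<omega>\<^sup>2))"
    unfolding w'eq a_def W_def T_def
    using assms(1) den
    apply (simp add: Re_divide power2_eq_square algebra_simps)
    apply (subst frac_eq_eq)
    apply (smt (verit) mult_pos_pos zero_le_mult_iff)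
    apply (smt (verit) mult_pos_pos zero_le_mult_iff)
    by (simp add: algebra_simps)
  moreover have "\<omega>\<^sup>2 / (\<tau>s * ((1 + \<tau>s)\<^sup>2 + \<omega>\<^sup>2)) > 0"
    using assms(1,2) den by (simp add: divide_pos_pos)
  ultimately show ?thesis by simp
qed

end
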